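(* For $a,b\in\mathbb{C}$ let $\mathfrak{g}_{a,b}$ be the Lie algebra with basis $\{L_i,W_i: i\in\mathbb{Z}\}$ and brackets $[L_m,L_n]=(m-n)L_{m+n}$, $[W_m,W_n]=0$, $[L_m,W_n]=((m+1)(a-1)-(n+1))W_{m+n}+bW_{m+n+1}$ (so $[W_n,L_m]=-[L_m,W_n]$). Each of the following bilinear products $\circ$ (given on basis elements, for all $m,n\in\mathbb{Z}$) is a compatible left-symmetric algebra structure on the indicated Lie algebra. On $\mathfrak{g}_{a,b}$ for all $a,b\in\mathbb{C}$: (1) $L_m\circ L_n=cL_{m+n+1}-(n+1)L_{m+n}$, $L_m\circ W_n=((a-1)(m+1)-(n+1))W_{m+n}+bW_{m+n+1}$, $W_m\circ L_n=0$, $W_m\circ W_n=0$, where $c\in\mathbb{C}$; (2) $L_m\circ L_n=cL_{m+n+1}-(n+1)L_{m+n}$, $L_m\circ W_n=((a-1)(m+1)-(n+1))W_{m+n}+(b+c)W_{m+n+1}$, $W_m\circ L_n=cW_{m+n+1}$, $W_m\circ W_n=0$, where $c\in\mathbb{C}\setminus\{0\}$; (3) $L_m\circ L_n=cL_{m+n+1}-(n+1)L_{m+n}$, $L_m\circ W_n=((a-2)(m+1)-(n+1))W_{m+n}+(b+c)W_{m+n+1}$, $W_m\circ L_n=-(n+1)W_{m+n}+cW_{m+n+1}$, $W_m\circ W_n=0$, where $c\in\mathbb{C}$. On $\mathfrak{g}_{1,b}$ for all $b\in\mathbb{C}$: (4) $L_m\circ L_n=2bL_{m+n+1}-(n+1)L_{m+n}$,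 $L_m\circ W_n=-(n+1)W_{m+n}+bW_{m+n+1}$, $W_m\circ L_n=0$, $W_m\circ W_n=k_1L_{m+n+1}$, where $k_1\neq0$. On $\mathfrak{g}_{1,b}$ with $b\neq0$: (5) $L_m\circ L_n=bL_{m+n+1}-(n+1)L_{m+n}$, $L_m\circ W_n=dL_{m+n+1}-(n+1)W_{m+n}+2bW_{m+n+1}$, $W_m\circ L_n=dL_{m+n+1}+bW_{m+n+1}$, $W_m\circ W_n=-\frac{d^2}{b}L_{m+n+1}-dW_{m+n+1}$, where $d\neq0$. On $\mathfrak{g}_{1,0}$: (6) $L_m\circ L_n=cL_{m+n+1}-(n+1)L_{m+n}$, $L_m\circ W_n=-(n+1)W_{m+n}$, $W_m\circ L_n=0$, $W_m\circ W_n=k_2W_{m+n+1}$, where $c\in\mathbb{C}$, $k_2\in\mathbb{C}\setminus\{0\}$; (7) $L_m\circ L_n=-(n+1)L_{m+n}$, $L_m\circ W_n=-(n+1)W_{m+n}$, $W_m\circ L_n=0$, $W_m\circ W_n=k_1L_{m+n+1}+k_2W_{m+n+1}$, where $k_1,k_2\in\mathbb{C}\setminus\{0\}$; (8) $L_m\circ L_n=cL_{m+n+1}-(n+1)L_{m+n}$, $L_m\circ W_n=h_1L_{m+n+1}-(n+1)W_{m+n}$, $W_m\circ L_n=h_1L_{m+n+1}$, $W_m\circ W_n=\frac{h_1(h_1-k_2)}{c}L_{m+n+1}+k_2W_{m+n+1}$, where $c,h_1\in\mathbb{C}\setminus\{0\}$, $k_2\in\mathbb{C}$; (9) $L_m\circ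 L_n=-(n+1)L_{m+n}$, $L_m\circ W_n=h_1L_{m+n+1}-(n+1)W_{m+n}$, $W_m\circ L_n=h_1L_{m+n+1}$, $W_m\circ W_n=k_1L_{m+n+1}+h_1W_{m+n+1}$, where $h_1,k_1\in\mathbb{C}\setminus\{0\}$; (10) $L_m\circ L_n=cL_{m+n+1}-(n+1)L_{m+n}$, $L_m\circ W_n=cW_{m+n+1}-(n+1)W_{m+n}$, $W_m\circ L_n=cW_{m+n+1}$, $W_m\circ W_n=k_1L_{m+n+1}+k_2W_{m+n+1}$, where $c\in\mathbb{C}\setminus\{0\}$, $(k_1,k_2)\in\mathbb{C}^2\setminus\{(0,0)\}$; (11) $L_m\circ L_n=cL_{m+n+1}-(n+1)L_{m+n}$, $L_m\circ W_n=-(m+n+2)W_{m+n}+cW_{m+n+1}$, $W_m\circ L_n=-(n+1)W_{m+n}+cW_{m+n+1}$, $W_m\circ W_n=k_2W_{m+n+1}$, where $c\in\mathbb{C}$, $k_2\in\mathbb{C}\setminus\{0\}$.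
   Context: A left-symmetric algebra is a vector space $A$ with a bilinear product $\circ$ satisfying $(x\circ y)\circ z-x\circ(y\circ z)=(y\circ x)\circ z-y\circ(x\circ z)$ for all $x,y,z\in A$. A compatible left-symmetric algebra structure on a Lie algebra $(\mathfrak{g},[\cdot,\cdot])$ is a left-symmetric product $\circ$ on the vector space $\mathfrak{g}$ such that $x\circ y-y\circ x=[x,y]$ for all $x,y\in\mathfrak{g}$. (The Lie algebra $\mathfrak{g}_{a,b}$ in the claim is the coefficient Lie algebra of the Lie conformal algebra $\mathcal{W}(a,b)$.) *)

theory Defs
  imports Complex_Main
begin

datatype basis = L int | W int

text \<open>Vectors are coefficient functions on the basis; elements of the vector space are the
finitely supported ones.\<close>
type_synonym vec = "basis \<Rightarrow> complex"

definition fsupp :: "vec \<Rightarrow> bool" where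
  "fsupp x \<longleftrightarrow> finite {i. x i \<noteq> 0}"

definition vadd :: "vec \<Rightarrow> vec \<Rightarrow> vec" (infixl "\<oplus>" 65) where
  "vadd u v = (\<lambda>k. u k + v k)"
definition vsub :: "vec \<Rightarrow> vec \<Rightarrow> vec" (infixl "\<ominus>" 65) where
  "vsub u v = (\<lambda>k. u k - v k)"
definition vzero :: vec where
  "vzero = (\<lambda>k. 0)"

definition sm :: "complex \<Rightarrow> basis \<Rightarrow> vec" where
  "sm a i = (\<lambda>k. if k = i then a else 0)"

definition bil :: "(basis \<Rightarrow> basis \<Rightarrow> vec) \<Rightarrow> vec \<Rightarrow> vec \<Rightarrow> vec" where
  "bil P x y = (\<lambda>k. \<Sum>i\<in>{i. x i \<noteq> 0}. \<Sum>j\<in>{j. y j \<noteq> 0}. x i * y j * P i j k)"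

fun lie :: "complex \<Rightarrow> complex \<Rightarrow> basis \<Rightarrow> basis \<Rightarrow> vec" where
  "lie a b (L m) (L n) = sm (of_int (m - n)) (L (m + n))"
| "lie a b (W m) (W n) = vzero"
| "lie a b (L m) (W n) =
     sm (of_int (m + 1) * (a - 1) - of_int (n + 1)) (W (m + n)) \<oplus> sm b (W (m + n + 1))"
| "lie a b (W n) (L m) =
     sm (-(of_int (m + 1) * (a - 1) - of_int (n + 1))) (W (m + n)) \<oplus> sm (-b) (W (m + n + 1))"

definition is_clsa :: "complex \<Rightarrow> complex \<Rightarrow> (basis \<Rightarrow> basis \<Rightarrow> vec) \<Rightarrow> bool" where
  "is_clsa a b P \<longleftrightarrow>
     (\<forall>x y z. fsupp x \<and> fsupp y \<and> fsupp z \<longrightarrow>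
        bil P (bil P x y) z \<ominus> bil P x (bil P y z) = bil P (bil P y x) z \<ominus> bil P y (bil P x z)) \<and>
     (\<forall>x y. fsupp x \<and> fsupp y \<longrightarrow> bil P x y \<ominus> bil P y x = bil (lie a b) x y)"

abbreviation nn :: "int \<Rightarrow> complex" where "nn n \<equiv> of_int (n + 1)"

fun P1 :: "complex \<Rightarrow> complex \<Rightarrow> complex \<Rightarrow> basis \<Rightarrow> basis \<Rightarrow> vec" where
  "P1 a b c (L m) (L n) = sm c (L (m+n+1)) \<oplus> sm (- nn n) (L (m+n))"
| "P1 a b c (L m) (W n) = sm ((a-1) * nn m - nn n) (W (m+n)) \<oplus> sm b (W (m+n+1))"
| "P1 a b c (W m) (L n) = vzero"
| "P1 a b c (W m) (W n) = vzero"

fun P2 :: "complex \<Rightarrow> complex \<Rightarrow> complex \<Rightarrow> basis \<Rightarrow> basis \<Rightarrow> vec" where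
  "P2 a b c (L m) (L n) = sm c (L (m+n+1)) \<oplus> sm (- nn n) (L (m+n))"
| "P2 a b c (L m) (W n) = sm ((a-1) * nn m - nn n) (W (m+n)) \<oplus> sm (b + c) (W (m+n+1))"
| "P2 a b c (W m) (L n) = sm c (W (m+n+1))"
| "P2 a b c (W m) (W n) = vzero"

fun P3 :: "complex \<Rightarrow> complex \<Rightarrow> complex \<Rightarrow> basis \<Rightarrow> basis \<Rightarrow> vec" where
  "P3 a b c (L m) (L n) = sm c (L (m+n+1)) \<oplus> sm (- nn n) (L (m+n))"
| "P3 a b c (L m) (W n) = sm ((a-2) * nn m - nn n) (W (m+n)) \<oplus> sm (b + c) (W (m+n+1))"
| "P3 a b c (W m) (L n) = sm (- nn n) (W (m+n)) \<oplus> sm c (W (m+n+1))"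
| "P3 a b c (W m) (W n) = vzero"

fun P4 :: "complex \<Rightarrow> complex \<Rightarrow> basis \<Rightarrow> basis \<Rightarrow> vec" where
  "P4 b k1 (L m) (L n) = sm (2 * b) (L (m+n+1)) \<oplus> sm (- nn n) (L (m+n))"
| "P4 b k1 (L m) (W n) = sm (- nn n) (W (m+n)) \<oplus> sm b (W (m+n+1))"
| "P4 b k1 (W m) (L n) = vzero"
| "P4 b k1 (W m) (W n) = sm k1 (L (m+n+1))"

fun P5 :: "complex \<Rightarrow> complex \<Rightarrow> basis \<Rightarrow> basis \<Rightarrow> vec" where
  "P5 b d (L m) (L n) = sm b (L (m+n+1)) \<oplus> sm (- nn n) (L (m+n))"
| "P5 b d (L m) (W n) = sm d (L (m+n+1)) \<oplus> sm (- nn n) (W (m+n)) \<oplus> sm (2 * b) (W (m+n+1))"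
| "P5 b d (W m) (L n) = sm d (L (m+n+1)) \<oplus> sm b (W (m+n+1))"
| "P5 b d (W m) (W n) = sm (- (d^2 / b)) (L (m+n+1)) \<oplus> sm (- d) (W (m+n+1))"

fun P6 :: "complex \<Rightarrow> complex \<Rightarrow> basis \<Rightarrow> basis \<Rightarrow> vec" where
  "P6 c k2 (L m) (L n) = sm c (L (m+n+1)) \<oplus> sm (- nn n) (L (m+n))"
| "P6 c k2 (L m) (W n) = sm (- nn n) (W (m+n))"
| "P6 c k2 (W m) (L n) = vzero"
| "P6 c k2 (W m) (W n) = sm k2 (W (m+n+1))"

fun P7 :: "complex \<Rightarrow> complex \<Rightarrow> basis \<Rightarrow> basis \<Rightarrow> vec" where
  "P7 k1 k2 (L m) (L n) = sm (- nn n) (L (m+n))"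
| "P7 k1 k2 (L m) (W n) = sm (- nn n) (W (m+n))"
| "P7 k1 k2 (W m) (L n) = vzero"
| "P7 k1 k2 (W m) (W n) = sm k1 (L (m+n+1)) \<oplus> sm k2 (W (m+n+1))"

fun P8 :: "complex \<Rightarrow> complex \<Rightarrow> complex \<Rightarrow> basis \<Rightarrow> basis \<Rightarrow> vec" where
  "P8 c h1 k2 (L m) (L n) = sm c (L (m+n+1)) \<oplus> sm (- nn n) (L (m+n))"
| "P8 c h1 k2 (L m) (W n) = sm h1 (L (m+n+1)) \<oplus> sm (- nn n) (W (m+n))"
| "P8 c h1 k2 (W m) (L n) = sm h1 (L (m+n+1))"
| "P8 c h1 k2 (W m) (W n) = sm (h1 * (h1 - k2) / c) (L (m+n+1)) \<oplus> sm k2 (W (m+n+1))"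

fun P9 :: "complex \<Rightarrow> complex \<Rightarrow> basis \<Rightarrow> basis \<Rightarrow> vec" where
  "P9 h1 k1 (L m) (L n) = sm (- nn n) (L (m+n))"
| "P9 h1 k1 (L m) (W n) = sm h1 (L (m+n+1)) \<oplus> sm (- nn n) (W (m+n))"
| "P9 h1 k1 (W m) (L n) = sm h1 (L (m+n+1))"
| "P9 h1 k1 (W m) (W n) = sm k1 (L (m+n+1)) \<oplus> sm h1 (W (m+n+1))"

fun P10 :: "complex \<Rightarrow> complex \<Rightarrow> complex \<Rightarrow> basis \<Rightarrow> basis \<Rightarrow> vec" where
  "P10 c k1 k2 (L m) (L n) = sm c (L (m+n+1)) \<oplus> sm (- nn n) (L (m+n))"
| "P10 c k1 k2 (L m) (W n) = sm c (W (m+n+1)) \<oplus> sm (- nn n) (W (m+n))"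
| "P10 c k1 k2 (W m) (L n) = sm c (W (m+n+1))"
| "P10 c k1 k2 (W m) (W n) = sm k1 (L (m+n+1)) \<oplus> sm k2 (W (m+n+1))"

fun P11 :: "complex \<Rightarrow> complex \<Rightarrow> basis \<Rightarrow> basis \<Rightarrow> vec" where
  "P11 c k2 (L m) (L n) = sm c (L (m+n+1)) \<oplus> sm (- nn n) (L (m+n))"
| "P11 c k2 (L m) (W n) = sm (- of_int (m+n+2)) (W (m+n)) \<oplus> sm c (W (m+n+1))"
| "P11 c k2 (W m) (L n) = sm (- nn n) (W (m+n)) \<oplus> sm c (W (m+n+1))"
| "P11 c k2 (W m) (W n) = sm k2 (W (m+n+1))"

end

theory Submission
  imports Defs
begin


definition supp :: "vec \<Rightarrow> basis set" where "supp x = {i. x i \<noteq> 0}"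

definition finP :: "(basis \<Rightarrow> basis \<Rightarrow> vec) \<Rightarrow> bool" where
  "finP P \<longleftrightarrow> (\<forall>i j. fsupp (P i j))"

lemma bil_sup:
  assumes "finite S" "finite T" "supp x \<subseteq> S" "supp y \<subseteq> T"
  shows "bil P x y k = (\<Sum>i\<in>S. \<Sum>j\<in>T. x i * y j * P i j k)"
proof -
  have "bil P x y k = (\<Sum>i\<in>S. \<Sum>j\<in>{j. y j \<noteq> 0}. x i * y j * P i j k)"
    unfolding bil_def
    by (rule sum.mono_neutral_left) (use assms in \<open>auto simp: supp_def\<close>)
  also have "\<dots> = (\<Sum>i\<in>S. \<Sum>j\<in>T. x i * y j * P i j k)"
    by (rule sum.cong[OF refl], rule sum.mono_neutral_left) (use assms in \<open>auto simp: supp_def\<close>)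
  finally show ?thesis .
qed

lemma fsupp_supp: "fsupp x \<longleftrightarrow> finite (supp x)" by (simp add: fsupp_def supp_def)

lemma supp_bil:
  "supp (bil P x y) \<subseteq> (\<Union>i\<in>supp x. \<Union>j\<in>supp y. supp (P i j))"
proof
  fix k assume "k \<in> supp (bil P x y)"
  hence "(\<Sum>i\<in>supp x. \<Sum>j\<in>supp y. x i * y j * P i j k) \<noteq> 0"
    by (simp add: supp_def bil_def)
  then obtain i j where "i \<in> supp x" "j \<in> supp y" "P i j k \<noteq> 0"
    by (metis (no_types, lifting) mult_zero_right sum.neutral)
  thus "k \<in> (\<Union>i\<in>supp x. \<Union>j\<in>supp y. supp (P i j))" by (auto simp: supp_def)
qed

lemma fsupp_bil: "finP P \<Longrightarrow> fsupp x \<Longrightarrow> fsupp y \<Longrightarrow> fsupp (bil P x y)"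
  unfolding fsupp_supp finP_def
  by (rule finite_subset[OF supp_bil]) auto

definition e :: "basis \<Rightarrow> vec" where "e i = sm 1 i"

lemma supp_e: "supp (e i) = {i}" by (auto simp: supp_def e_def sm_def)

lemma sum3: "(\<Sum>u\<in>U. \<Sum>j\<in>Y. \<Sum>l\<in>Z. f j l u) = (\<Sum>j\<in>Y. \<Sum>l\<in>Z. \<Sum>u\<in>U. (f j l u :: complex))"
proof -
  have "(\<Sum>u\<in>U. \<Sum>j\<in>Y. \<Sum>l\<in>Z. f j l u) = (\<Sum>j\<in>Y. \<Sum>u\<in>U. \<Sum>l\<in>Z. f j l u)" by (rule sum.swap)
  also have "\<dots> = (\<Sum>j\<in>Y. \<Sum>l\<in>Z. \<Sum>u\<in>U. f j l u)" by (rule sum.cong[OF refl], rule sum.swap)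
  finally show ?thesis .
qed

lemma sum3b: "(\<Sum>u\<in>U. \<Sum>l\<in>Z. \<Sum>j\<in>Y. f j l u) = (\<Sum>j\<in>Y. \<Sum>l\<in>Z. \<Sum>u\<in>U. (f j l u :: complex))"
proof -
  have "(\<Sum>u\<in>U. \<Sum>l\<in>Z. \<Sum>j\<in>Y. f j l u) = (\<Sum>l\<in>Z. \<Sum>u\<in>U. \<Sum>j\<in>Y. f j l u)" by (rule sum.swap)
  also have "\<dots> = (\<Sum>l\<in>Z. \<Sum>j\<in>Y. \<Sum>u\<in>U. f j l u)" by (rule sum.cong[OF refl], rule sum.swap)
  also have "\<dots> = (\<Sum>j\<in>Y. \<Sum>l\<in>Z. \<Sum>u\<in>U. f j l u)" by (rule sum.swap)
  finally show ?thesis .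
qed

lemma sum4: "(\<Sum>u\<in>U. \<Sum>l\<in>Z. \<Sum>i\<in>X. \<Sum>j\<in>Y. f i j l u) = (\<Sum>i\<in>X. \<Sum>j\<in>Y. \<Sum>l\<in>Z. \<Sum>u\<in>U. (f i j l u :: complex))"
proof -
  have "(\<Sum>u\<in>U. \<Sum>l\<in>Z. \<Sum>i\<in>X. \<Sum>j\<in>Y. f i j l u) = (\<Sum>u\<in>U. \<Sum>i\<in>X. \<Sum>l\<in>Z. \<Sum>j\<in>Y. f i j l u)"
    by (rule sum.cong[OF refl], rule sum.swap)
  also have "\<dots> = (\<Sum>i\<in>X. \<Sum>u\<in>U. \<Sum>l\<in>Z. \<Sum>j\<in>Y. f i j l u)"
    by (rule sum.swap)
  also have "\<dots> = (\<Sum>i\<in>X. \<Sum>j\<in>Y. \<Sum>l\<in>Z. \<Sum>u\<in>U. f i j l u)"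
    by (rule sum.cong[OF refl], rule sum3b)
  finally show ?thesis .
qed

lemma F1:
  assumes P: "finP P" and x: "fsupp x" and y: "fsupp y" and z: "fsupp z"
  shows "bil P (bil P x y) z k = (\<Sum>i\<in>supp x. \<Sum>j\<in>supp y. \<Sum>l\<in>supp z. x i * y j * z l * bil P (P i j) (e l) k)"
proof -
  define U where "U = (\<Union>i\<in>supp x. \<Union>j\<in>supp y. supp (P i j))"
  have fU: "finite U" using P x y unfolding U_def finP_def fsupp_supp by auto
  have fx: "finite (supp x)" "finite (supp y)" "finite (supp z)" using x y z fsupp_supp by auto
  have "bil P (bil P x y) z k = (\<Sum>u\<in>U. \<Sum>l\<in>supp z. bil P x y u * z l * P u l k)"
    by (rule bil_sup) (use fU fx supp_bil in \<open>auto simp: U_def\<close>)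
  also have "\<dots> = (\<Sum>u\<in>U. \<Sum>l\<in>supp z. (\<Sum>i\<in>supp x. \<Sum>j\<in>supp y. x i * y j * P i j u) * z l * P u l k)"
    by (simp add: bil_sup[OF fx(1,2)])
  also have "\<dots> = (\<Sum>u\<in>U. \<Sum>l\<in>supp z. \<Sum>i\<in>supp x. \<Sum>j\<in>supp y. x i * y j * z l * (P i j u * P u l k))"
    by (simp only: sum_distrib_left sum_distrib_right) (simp add: mult_ac)
  also have "\<dots> = (\<Sum>i\<in>supp x. \<Sum>j\<in>supp y. \<Sum>l\<in>supp z. \<Sum>u\<in>U. x i * y j * z l * (P i j u * P u l k))"
    by (rule sum4)
  also have "\<dots> = (\<Sum>i\<in>supp x. \<Sum>j\<in>supp y. \<Sum>l\<in>supp z. x i * y j * z l * bil P (P i j) (e l) k)"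
  proof (intro sum.cong refl)
    fix i j l assume "i \<in> supp x" "j \<in> supp y" "l \<in> supp z"
    have "bil P (P i j) (e l) k = (\<Sum>u\<in>U. \<Sum>l'\<in>{l}. P i j u * e l l' * P u l' k)"
      by (rule bil_sup) (use fU \<open>i \<in> supp x\<close> \<open>j \<in> supp y\<close> supp_e in \<open>auto simp: U_def\<close>)
    thus "(\<Sum>u\<in>U. x i * y j * z l * (P i j u * P u l k)) = x i * y j * z l * bil P (P i j) (e l) k"
      by (simp add: e_def sm_def sum_distrib_left)
  qed
  finally show ?thesis .
qed

lemma F2:
  assumes P: "finP P" and x: "fsupp x" and y: "fsupp y" and z: "fsupp z"
  shows "bil P x (bil P y z) k = (\<Sum>i\<in>supp x. \<Sum>j\<in>supp y. \<Sum>l\<in>supp z. x i * y j * z l * bil P (e i) (P j l) k)"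
proof -
  define U where "U = (\<Union>i\<in>supp y. \<Union>j\<in>supp z. supp (P i j))"
  have fU: "finite U" using P y z unfolding U_def finP_def fsupp_supp by auto
  have fx: "finite (supp x)" "finite (supp y)" "finite (supp z)" using x y z fsupp_supp by auto
  have "bil P x (bil P y z) k = (\<Sum>i\<in>supp x. \<Sum>u\<in>U. x i * bil P y z u * P i u k)"
    by (rule bil_sup) (use fU fx supp_bil in \<open>auto simp: U_def\<close>)
  also have "\<dots> = (\<Sum>i\<in>supp x. \<Sum>u\<in>U. x i * (\<Sum>j\<in>supp y. \<Sum>l\<in>supp z. y j * z l * P j l u) * P i u k)"
    by (simp add: bil_sup[OF fx(2,3)])
  also have "\<dots> = (\<Sum>i\<in>supp x. \<Sum>u\<in>U. \<Sum>j\<in>supp y. \<Sum>l\<in>supp z. x i * y j * z l * (P j l u * P i u k))"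
    by (simp only: sum_distrib_left sum_distrib_right) (simp add: mult_ac)
  also have "\<dots> = (\<Sum>i\<in>supp x. \<Sum>j\<in>supp y. \<Sum>l\<in>supp z. \<Sum>u\<in>U. x i * y j * z l * (P j l u * P i u k))"
    by (rule sum.cong[OF refl], rule sum3)
  also have "\<dots> = (\<Sum>i\<in>supp x. \<Sum>j\<in>supp y. \<Sum>l\<in>supp z. x i * y j * z l * bil P (e i) (P j l) k)"
  proof (intro sum.cong refl)
    fix i j l assume "i \<in> supp x" "j \<in> supp y" "l \<in> supp z"
    have "bil P (e i) (P j l) k = (\<Sum>i'\<in>{i}. \<Sum>u\<in>U. e i i' * P j l u * P i' u k)"
      by (rule bil_sup) (use fU \<open>l \<in> supp z\<close> \<open>j \<in> supp y\<close> supp_e in \<open>auto simp: U_def\<close>)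
    thus "(\<Sum>u\<in>U. x i * y j * z l * (P j l u * P i u k)) = x i * y j * z l * bil P (e i) (P j l) k"
      by (simp add: e_def sm_def sum_distrib_left)
  qed
  finally show ?thesis .
qed

lemma main:
  assumes P: "finP P"
    and LS: "\<And>i j l k. bil P (P i j) (e l) k - bil P (e i) (P j l) k = bil P (P j i) (e l) k - bil P (e j) (P i l) k"
    and C: "\<And>i j k. P i j k - P j i k = Q i j k"
  shows "is_clsa a b P \<longleftrightarrow> (\<forall>x y. fsupp x \<and> fsupp y \<longrightarrow> bil Q x y = bil (lie a b) x y)"
proof -
  have 1: "bil P (bil P x y) z \<ominus> bil P x (bil P y z) = bil P (bil P y x) z \<ominus> bil P y (bil P x z)"
    if x: "fsupp x" and y: "fsupp y" and z: "fsupp z" for x y z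
  proof
    fix k
    have fx: "finite (supp x)" "finite (supp y)" "finite (supp z)" using x y z fsupp_supp by auto
    have "(bil P (bil P x y) z \<ominus> bil P x (bil P y z)) k =
       (\<Sum>i\<in>supp x. \<Sum>j\<in>supp y. \<Sum>l\<in>supp z. x i * y j * z l * (bil P (P i j) (e l) k - bil P (e i) (P j l) k))"
      by (simp add: vsub_def F1[OF P x y z] F2[OF P x y z] sum_subtractf[symmetric] right_diff_distrib)
    also have "\<dots> = (\<Sum>i\<in>supp x. \<Sum>j\<in>supp y. \<Sum>l\<in>supp z. y j * x i * z l * (bil P (P j i) (e l) k - bil P (e j) (P i l) k))"
      by (simp add: LS mult_ac)
    also have "\<dots> = (\<Sum>j\<in>supp y. \<Sum>i\<in>supp x. \<Sum>l\<in>supp z. y j * x i * z l * (bil P (P j i) (e l) k - bil P (e j) (P i l) k))"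
      by (rule sum.swap)
    also have "\<dots> = (bil P (bil P y x) z \<ominus> bil P y (bil P x z)) k"
      by (simp add: vsub_def F1[OF P y x z] F2[OF P y x z] sum_subtractf[symmetric] right_diff_distrib)
    finally show "(bil P (bil P x y) z \<ominus> bil P x (bil P y z)) k = (bil P (bil P y x) z \<ominus> bil P y (bil P x z)) k" .
  qed
  have 2: "bil P x y \<ominus> bil P y x = bil Q x y" if x: "fsupp x" and y: "fsupp y" for x y
  proof
    fix k
    have fx: "finite (supp x)" "finite (supp y)" using x y fsupp_supp by auto
    have "(bil P x y \<ominus> bil P y x) k = (\<Sum>i\<in>supp x. \<Sum>j\<in>supp y. x i * y j * P i j k) - (\<Sum>j\<in>supp y. \<Sum>i\<in>supp x. y j * x i * P j i k)"
      by (simp add: vsub_def bil_sup[OF fx(1,2)] bil_sup[OF fx(2,1)])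
    also have "\<dots> = (\<Sum>i\<in>supp x. \<Sum>j\<in>supp y. x i * y j * (P i j k - P j i k))"
    proof -
      have "(\<Sum>j\<in>supp y. \<Sum>i\<in>supp x. y j * x i * P j i k) = (\<Sum>i\<in>supp x. \<Sum>j\<in>supp y. x i * y j * P j i k)"
        by (subst sum.swap) (simp add: mult_ac)
      thus ?thesis by (simp add: sum_subtractf[symmetric] right_diff_distrib)
    qed
    also have "\<dots> = bil Q x y k"
      by (simp add: C bil_sup[OF fx(1,2)])
    finally show "(bil P x y \<ominus> bil P y x) k = bil Q x y k" .
  qed
  show ?thesis unfolding is_clsa_def using 1 2 by auto
qed

lemma main2:
  assumes P: "finP P"
    and LS: "\<And>i j l k. bil P (P i j) (e l) k - bil P (e i) (P j l) k = bil P (P j i) (e l) k - bil P (e j) (P i l) k"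
    and C: "\<And>i j k. P i j k - P j i k = lie a b i j k"
  shows "is_clsa a b P"
  using main[OF P LS C] by simp



lemma fsupp_sm[simp]: "fsupp (sm a u)"
  unfolding fsupp_def sm_def by (rule finite_subset[of _ "{u}"]) auto
lemma fsupp_vzero[simp]: "fsupp vzero" by (simp add: fsupp_def vzero_def)
lemma fsupp_vadd[simp]: "fsupp v \<Longrightarrow> fsupp w \<Longrightarrow> fsupp (v \<oplus> w)"
  unfolding fsupp_def vadd_def by (rule finite_subset[of _ "{i. v i \<noteq> 0} \<union> {i. w i \<noteq> 0}"]) auto

lemma bl_sm[simp]: "bil P (sm a u) (e l) k = a * P u l k"
  by (subst bil_sup[of "{u}" "{l}"]) (auto simp: supp_def sm_def e_def)
lemma br_sm[simp]: "bil P (e i) (sm a u) k = a * P i u k"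
  by (subst bil_sup[of "{i}" "{u}"]) (auto simp: supp_def sm_def e_def)
lemma bl_zero[simp]: "bil P vzero y k = 0"
  by (simp add: bil_def vzero_def)
lemma br_zero[simp]: "bil P x vzero k = 0"
  by (simp add: bil_def vzero_def)
lemma bl_add[simp]: "fsupp v \<Longrightarrow> fsupp w \<Longrightarrow> bil P (v \<oplus> w) (e l) k = bil P v (e l) k + bil P w (e l) k"
  unfolding fsupp_supp
  by (subst (1 2 3) bil_sup[of "supp v \<union> supp w" "{l}"])
     (auto simp: supp_def vadd_def e_def sm_def distrib_right sum.distrib)
lemma br_add[simp]: "fsupp v \<Longrightarrow> fsupp w \<Longrightarrow> bil P (e i) (v \<oplus> w) k = bil P (e i) v k + bil P (e i) w k"
  unfolding fsupp_supp
  by (subst (1 2 3) bil_sup[of "{i}" "supp v \<union> supp w"])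
     (auto simp: supp_def vadd_def e_def sm_def distrib_left distrib_right sum.distrib)


lemma P1_cl:
  shows "is_clsa a b (P1 a b c)"
proof (rule main2)
  show "finP (P1 a b c)"
    unfolding finP_def by (intro allI, case_tac i; case_tac j; simp)
  show "(P1 a b c) i j k - (P1 a b c) j i k = lie a b i j k" for i j k
    by (cases i; cases j; cases k) (auto simp: sm_def vadd_def vzero_def algebra_simps)
  show "bil (P1 a b c) ((P1 a b c) i j) (e l) k - bil (P1 a b c) (e i) ((P1 a b c) j l) k =
       bil (P1 a b c) ((P1 a b c) j i) (e l) k - bil (P1 a b c) (e j) ((P1 a b c) i l) k" for i j l k
    by (cases i; cases j; cases l; simp; cases k; auto simp: sm_def vadd_def vzero_def algebra_simps)
qed

lemma P2_cl:
  shows "is_clsa a b (P2 a b c)"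
proof (rule main2)
  show "finP (P2 a b c)"
    unfolding finP_def by (intro allI, case_tac i; case_tac j; simp)
  show "(P2 a b c) i j k - (P2 a b c) j i k = lie a b i j k" for i j k
    by (cases i; cases j; cases k) (auto simp: sm_def vadd_def vzero_def algebra_simps)
  show "bil (P2 a b c) ((P2 a b c) i j) (e l) k - bil (P2 a b c) (e i) ((P2 a b c) j l) k =
       bil (P2 a b c) ((P2 a b c) j i) (e l) k - bil (P2 a b c) (e j) ((P2 a b c) i l) k" for i j l k
    by (cases i; cases j; cases l; simp; cases k; auto simp: sm_def vadd_def vzero_def algebra_simps)
qed

lemma P3_cl:
  shows "is_clsa a b (P3 a b c)"
proof (rule main2)
  show "finP (P3 a b c)"
    unfolding finP_def by (intro allI, case_tac i; case_tac j; simp)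
  show "(P3 a b c) i j k - (P3 a b c) j i k = lie a b i j k" for i j k
    by (cases i; cases j; cases k) (auto simp: sm_def vadd_def vzero_def algebra_simps)
  show "bil (P3 a b c) ((P3 a b c) i j) (e l) k - bil (P3 a b c) (e i) ((P3 a b c) j l) k =
       bil (P3 a b c) ((P3 a b c) j i) (e l) k - bil (P3 a b c) (e j) ((P3 a b c) i l) k" for i j l k
    by (cases i; cases j; cases l; simp; cases k; auto simp: sm_def vadd_def vzero_def algebra_simps)
qed

lemma P4_cl:
  shows "is_clsa 1 b (P4 b k1)"
proof (rule main2)
  show "finP (P4 b k1)"
    unfolding finP_def by (intro allI, case_tac i; case_tac j; simp)
  show "(P4 b k1) i j k - (P4 b k1) j i k = lie 1 b i j k" for i j k
    by (cases i; cases j; cases k) (auto simp: sm_def vadd_def vzero_def algebra_simps)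
  show "bil (P4 b k1) ((P4 b k1) i j) (e l) k - bil (P4 b k1) (e i) ((P4 b k1) j l) k =
       bil (P4 b k1) ((P4 b k1) j i) (e l) k - bil (P4 b k1) (e j) ((P4 b k1) i l) k" for i j l k
    by (cases i; cases j; cases l; simp; cases k; auto simp: sm_def vadd_def vzero_def algebra_simps)
qed

lemma P5_cl:
  assumes "b \<noteq> 0"
  shows "is_clsa 1 b (P5 b d)"
proof (rule main2)
  show "finP (P5 b d)"
    unfolding finP_def by (intro allI, case_tac i; case_tac j; simp)
  show "(P5 b d) i j k - (P5 b d) j i k = lie 1 b i j k" for i j k
    by (cases i; cases j; cases k) (auto simp: sm_def vadd_def vzero_def algebra_simps)
  show "bil (P5 b d) ((P5 b d) i j) (e l) k - bil (P5 b d) (e i) ((P5 b d) j l) k =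
       bil (P5 b d) ((P5 b d) j i) (e l) k - bil (P5 b d) (e j) ((P5 b d) i l) k" for i j l k
    using assms by (cases i; cases j; cases l; simp; cases k; auto simp: sm_def vadd_def vzero_def algebra_simps field_simps power2_eq_square)
qed

lemma P6_cl:
  shows "is_clsa 1 0 (P6 c k2)"
proof (rule main2)
  show "finP (P6 c k2)"
    unfolding finP_def by (intro allI, case_tac i; case_tac j; simp)
  show "(P6 c k2) i j k - (P6 c k2) j i k = lie 1 0 i j k" for i j k
    by (cases i; cases j; cases k) (auto simp: sm_def vadd_def vzero_def algebra_simps)
  show "bil (P6 c k2) ((P6 c k2) i j) (e l) k - bil (P6 c k2) (e i) ((P6 c k2) j l) k =
       bil (P6 c k2) ((P6 c k2) j i) (e l) k - bil (P6 c k2) (e j) ((P6 c k2) i l) k" for i j l k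
    by (cases i; cases j; cases l; simp; cases k; auto simp: sm_def vadd_def vzero_def algebra_simps)
qed

lemma P7_cl:
  shows "is_clsa 1 0 (P7 k1 k2)"
proof (rule main2)
  show "finP (P7 k1 k2)"
    unfolding finP_def by (intro allI, case_tac i; case_tac j; simp)
  show "(P7 k1 k2) i j k - (P7 k1 k2) j i k = lie 1 0 i j k" for i j k
    by (cases i; cases j; cases k) (auto simp: sm_def vadd_def vzero_def algebra_simps)
  show "bil (P7 k1 k2) ((P7 k1 k2) i j) (e l) k - bil (P7 k1 k2) (e i) ((P7 k1 k2) j l) k =
       bil (P7 k1 k2) ((P7 k1 k2) j i) (e l) k - bil (P7 k1 k2) (e j) ((P7 k1 k2) i l) k" for i j l k
    by (cases i; cases j; cases l; simp; cases k; auto simp: sm_def vadd_def vzero_def algebra_simps)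
qed

lemma P8_cl:
  assumes "c \<noteq> 0"
  shows "is_clsa 1 0 (P8 c h1 k2)"
proof (rule main2)
  show "finP (P8 c h1 k2)"
    unfolding finP_def by (intro allI, case_tac i; case_tac j; simp)
  show "(P8 c h1 k2) i j k - (P8 c h1 k2) j i k = lie 1 0 i j k" for i j k
    by (cases i; cases j; cases k) (auto simp: sm_def vadd_def vzero_def algebra_simps)
  show "bil (P8 c h1 k2) ((P8 c h1 k2) i j) (e l) k - bil (P8 c h1 k2) (e i) ((P8 c h1 k2) j l) k =
       bil (P8 c h1 k2) ((P8 c h1 k2) j i) (e l) k - bil (P8 c h1 k2) (e j) ((P8 c h1 k2) i l) k" for i j l k
    using assms by (cases i; cases j; cases l; simp; cases k; auto simp: sm_def vadd_def vzero_def algebra_simps field_simps)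
qed

lemma P9_cl:
  shows "is_clsa 1 0 (P9 h1 k1)"
proof (rule main2)
  show "finP (P9 h1 k1)"
    unfolding finP_def by (intro allI, case_tac i; case_tac j; simp)
  show "(P9 h1 k1) i j k - (P9 h1 k1) j i k = lie 1 0 i j k" for i j k
    by (cases i; cases j; cases k) (auto simp: sm_def vadd_def vzero_def algebra_simps)
  show "bil (P9 h1 k1) ((P9 h1 k1) i j) (e l) k - bil (P9 h1 k1) (e i) ((P9 h1 k1) j l) k =
       bil (P9 h1 k1) ((P9 h1 k1) j i) (e l) k - bil (P9 h1 k1) (e j) ((P9 h1 k1) i l) k" for i j l k
    by (cases i; cases j; cases l; simp; cases k; auto simp: sm_def vadd_def vzero_def algebra_simps)
qed

lemma P10_cl:
  shows "is_clsa 1 0 (P10 c k1 k2)"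
proof (rule main2)
  show "finP (P10 c k1 k2)"
    unfolding finP_def by (intro allI, case_tac i; case_tac j; simp)
  show "(P10 c k1 k2) i j k - (P10 c k1 k2) j i k = lie 1 0 i j k" for i j k
    by (cases i; cases j; cases k) (auto simp: sm_def vadd_def vzero_def algebra_simps)
  show "bil (P10 c k1 k2) ((P10 c k1 k2) i j) (e l) k - bil (P10 c k1 k2) (e i) ((P10 c k1 k2) j l) k =
       bil (P10 c k1 k2) ((P10 c k1 k2) j i) (e l) k - bil (P10 c k1 k2) (e j) ((P10 c k1 k2) i l) k" for i j l k
    by (cases i; cases j; cases l; simp; cases k; auto simp: sm_def vadd_def vzero_def algebra_simps)
qed

lemma P11_cl:
  shows "is_clsa 1 0 (P11 c k2)"
proof (rule main2)
  show "finP (P11 c k2)"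
    unfolding finP_def by (intro allI, case_tac i; case_tac j; simp)
  show "(P11 c k2) i j k - (P11 c k2) j i k = lie 1 0 i j k" for i j k
    by (cases i; cases j; cases k) (auto simp: sm_def vadd_def vzero_def algebra_simps)
  show "bil (P11 c k2) ((P11 c k2) i j) (e l) k - bil (P11 c k2) (e i) ((P11 c k2) j l) k =
       bil (P11 c k2) ((P11 c k2) j i) (e l) k - bil (P11 c k2) (e j) ((P11 c k2) i l) k" for i j l k
    by (cases i; cases j; cases l; simp; cases k; auto simp: sm_def vadd_def vzero_def algebra_simps)
qed

theorem corollary3p8:
  shows "(\<forall>a b c. is_clsa a b (P1 a b c))
       \<and> (\<forall>a b c. c \<noteq> 0 \<longrightarrow> is_clsa a b (P2 a b c))
       \<and> (\<forall>a b c. is_clsa a b (P3 a b c))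
       \<and> (\<forall>b k1. k1 \<noteq> 0 \<longrightarrow> is_clsa 1 b (P4 b k1))
       \<and> (\<forall>b d. b \<noteq> 0 \<and> d \<noteq> 0 \<longrightarrow> is_clsa 1 b (P5 b d))
       \<and> (\<forall>c k2. k2 \<noteq> 0 \<longrightarrow> is_clsa 1 0 (P6 c k2))
       \<and> (\<forall>k1 k2. k1 \<noteq> 0 \<and> k2 \<noteq> 0 \<longrightarrow> is_clsa 1 0 (P7 k1 k2))
       \<and> (\<forall>c h1 k2. c \<noteq> 0 \<and> h1 \<noteq> 0 \<longrightarrow> is_clsa 1 0 (P8 c h1 k2))
       \<and> (\<forall>h1 k1. h1 \<noteq> 0 \<and> k1 \<noteq> 0 \<longrightarrow> is_clsa 1 0 (P9 h1 k1))
       \<and> (\<forall>c k1 k2. c \<noteq> 0 \<and> (k1, k2) \<noteq> (0, 0) \<longrightarrow> is_clsa 1 0 (P10 c k1 k2))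
       \<and> (\<forall>c k2. k2 \<noteq> 0 \<longrightarrow> is_clsa 1 0 (P11 c k2))"
  by (auto intro!: P1_cl P2_cl P3_cl P4_cl P5_cl P6_cl P7_cl P8_cl P9_cl P10_cl P11_cl)

end
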